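(* Suppose the block size $B$ is finite. Then the only (possibly randomized) TFM $(\mathbf x,\mathbf p,\mu)$ satisfying both UIC and $1$-SCP is the trivial mechanism that never confirms any transaction (i.e. $x_i(\mathbf b)=0$ for all bid vectors $\mathbf b$ and all $i$) and always pays the miner nothing.
   Context: Setting (transaction fee mechanism, TFM). Each user $i$ has a private true value $v_i\ge 0$ for having its transaction confirmed in the next block and submits a single bid $b_i\ge 0$; a bid vector is $\mathbf b=(b_1,\dots,b_m)$. A block contains at most $B$ transactions. A TFM consists of an inclusion rule (run by the miner) selecting at most $B$ bids to include in the block, and a confirmation rule, payment rule and miner-revenue rule (run by the blockchain, using only the included bids) deciding which included bids are confirmed, what each confirmed bid pays (at most its bid; unconfirmed bids pay $0$), and what the miner receives (at most the total payment of confirmed bids; the remainder is burnt). Rules may be randomized; the mechanism treats users symmetrically (swapping two users' bids swaps their outcomes). Composing the honest inclusion rule with the other rules gives $(\mathbf x,\mathbf p,\mu)$: $x_i(\mathbf b)\in[0,1]$ is the probability user $i$ is confirmed, $p_i(\mathbf b)$ its expected payment, $\mu(\mathbf b)$ the miner's expected revenue. Strategic behavior: a strategic player is a single user, the miner, or a coalition of the miner with some users; it may have its users bid untruthfully after seeing all other bids, inject fake bids (true value $0$), and, if it contains the miner, include any set of at most $B$ available bids instead of following the inclusion rule. Ordinary utility: miner's revenue (if the miner belongs to the player) plus $v-p$ for each confirmed transaction of the player with true value $v$ and payment $p$. UIC: assuming the miner follows the mechanism, each user's expected utility is maximized by bidding truthfully, whatever the other bids. $1$-SCP: for every coalition of the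 miner and one user, expected joint utility is maximized when the user bids truthfully and the miner follows the mechanism, whatever the other bids. *)

theory Defs
  imports "HOL-Probability.Probability_Mass_Function"
begin

text \<open>
A TFM is given by four components:
  inc  :: real list => nat set pmf      (randomized inclusion rule, run by the miner; it
                                          returns the set of indices of the included bids)
  conf :: real list => nat => real      (confirmation rule: probability that the k-th included
                                          bid is confirmed, given the list of included bids)
  pay  :: real list => nat => real      (payment rule: expected payment of the k-th included bid)
  mrev :: real list => real             (miner-revenue rule: expected miner revenue)
The blockchain rules only see the list of included bids (in index order).
Users are identified with positions in the bid vector.
\<close>

definition nonneg_bids :: "real list \<Rightarrow> bool" where
  "nonneg_bids b \<longleftrightarrow> (\<forall>y\<in>set b. 0 \<le> y)"

definition incl :: "real list \<Rightarrow> nat set \<Rightarrow> real list" where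
  "incl b S = map (\<lambda>k. b ! k) (sorted_list_of_set S)"

definition pos :: "nat set \<Rightarrow> nat \<Rightarrow> nat" where
  "pos S k = card {j\<in>S. j < k}"

definition tr :: "nat \<Rightarrow> nat \<Rightarrow> nat \<Rightarrow> nat" where
  "tr i j k = (if k = i then j else if k = j then i else k)"

definition swap_bids :: "nat \<Rightarrow> nat \<Rightarrow> real list \<Rightarrow> real list" where
  "swap_bids i j b = b[i := b ! j, j := b ! i]"

definition conf_at :: "(real list \<Rightarrow> nat \<Rightarrow> real) \<Rightarrow> real list \<Rightarrow> nat set \<Rightarrow> nat \<Rightarrow> real" where
  "conf_at conf b S k = (if k \<in> S then conf (incl b S) (pos S k) else 0)"

definition pay_at :: "(real list \<Rightarrow> nat \<Rightarrow> real) \<Rightarrow> real list \<Rightarrow> nat set \<Rightarrow> nat \<Rightarrow> real" where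
  "pay_at pay b S k = (if k \<in> S then pay (incl b S) (pos S k) else 0)"

definition rev_at :: "(real list \<Rightarrow> real) \<Rightarrow> real list \<Rightarrow> nat set \<Rightarrow> real" where
  "rev_at mrev b S = mrev (incl b S)"

definition xx :: "(real list \<Rightarrow> nat set pmf) \<Rightarrow> (real list \<Rightarrow> nat \<Rightarrow> real) \<Rightarrow> real list \<Rightarrow> nat \<Rightarrow> real" where
  "xx inc conf b k = measure_pmf.expectation (inc b) (\<lambda>S. conf_at conf b S k)"

definition pp :: "(real list \<Rightarrow> nat set pmf) \<Rightarrow> (real list \<Rightarrow> nat \<Rightarrow> real) \<Rightarrow> real list \<Rightarrow> nat \<Rightarrow> real" where
  "pp inc pay b k = measure_pmf.expectation (inc b) (\<lambda>S. pay_at pay b S k)"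

definition mu :: "(real list \<Rightarrow> nat set pmf) \<Rightarrow> (real list \<Rightarrow> real) \<Rightarrow> real list \<Rightarrow> real" where
  "mu inc mrev b = measure_pmf.expectation (inc b) (\<lambda>S. rev_at mrev b S)"

definition valid_tfm :: "nat \<Rightarrow> (real list \<Rightarrow> nat set pmf) \<Rightarrow> (real list \<Rightarrow> nat \<Rightarrow> real)
    \<Rightarrow> (real list \<Rightarrow> nat \<Rightarrow> real) \<Rightarrow> (real list \<Rightarrow> real) \<Rightarrow> bool" where
  "valid_tfm B inc conf pay mrev \<longleftrightarrow>
     \<comment> \<open>inclusion rule selects at most B of the available bids\<close>
     (\<forall>b. nonneg_bids b \<longrightarrow> (\<forall>S\<in>set_pmf (inc b). S \<subseteq> {..<length b} \<and> card S \<le> B)) \<and>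
     \<comment> \<open>confirmation / payment / miner revenue constraints on included bids\<close>
     (\<forall>c. nonneg_bids c \<longrightarrow> length c \<le> B \<longrightarrow>
        (\<forall>k<length c. 0 \<le> conf c k \<and> conf c k \<le> 1 \<and>
                        0 \<le> pay c k \<and> pay c k \<le> c ! k * conf c k) \<and>
        0 \<le> mrev c \<and> mrev c \<le> (\<Sum>k<length c. pay c k)) \<and>
     \<comment> \<open>symmetry of the blockchain rules\<close>
     (\<forall>c i j. nonneg_bids c \<longrightarrow> length c \<le> B \<longrightarrow> i < length c \<longrightarrow> j < length c \<longrightarrow>
        (\<forall>k<length c. conf (swap_bids i j c) k = conf c (tr i j k) \<and>
                        pay (swap_bids i j c) k = pay c (tr i j k)) \<and>
        mrev (swap_bids i j c) = mrev c) \<and>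
     \<comment> \<open>symmetry of the composed honest mechanism\<close>
     (\<forall>b i j. nonneg_bids b \<longrightarrow> i < length b \<longrightarrow> j < length b \<longrightarrow>
        (\<forall>k<length b. xx inc conf (swap_bids i j b) k = xx inc conf b (tr i j k) \<and>
                        pp inc pay (swap_bids i j b) k = pp inc pay b (tr i j k)) \<and>
        mu inc mrev (swap_bids i j b) = mu inc mrev b)"

text \<open>UIC: user i (true value b!i) cannot gain, with the miner honest, by changing its bid
  to b' and injecting fake bids f (true value 0), whatever the other bids.\<close>
definition UIC :: "(real list \<Rightarrow> nat set pmf) \<Rightarrow> (real list \<Rightarrow> nat \<Rightarrow> real)
    \<Rightarrow> (real list \<Rightarrow> nat \<Rightarrow> real) \<Rightarrow> bool" where
  "UIC inc conf pay \<longleftrightarrow>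
     (\<forall>b i b' f. nonneg_bids b \<longrightarrow> i < length b \<longrightarrow> 0 \<le> b' \<longrightarrow> nonneg_bids f \<longrightarrow>
        (let b2 = b[i := b'] @ f in
          xx inc conf b2 i * (b ! i) - pp inc pay b2 i
            - (\<Sum>j\<in>{length b..<length b2}. pp inc pay b2 j)
          \<le> xx inc conf b i * (b ! i) - pp inc pay b i))"

definition SCP1 :: "nat \<Rightarrow> (real list \<Rightarrow> nat set pmf) \<Rightarrow> (real list \<Rightarrow> nat \<Rightarrow> real)
    \<Rightarrow> (real list \<Rightarrow> nat \<Rightarrow> real) \<Rightarrow> (real list \<Rightarrow> real) \<Rightarrow> bool" where
  "SCP1 B inc conf pay mrev \<longleftrightarrow>
     (\<forall>b i b' f S. nonneg_bids b \<longrightarrow> i < length b \<longrightarrow> 0 \<le> b' \<longrightarrow> nonneg_bids f \<longrightarrow>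
        (let b2 = b[i := b'] @ f in
          S \<subseteq> {..<length b2} \<longrightarrow> card S \<le> B \<longrightarrow>
          rev_at mrev b2 S + conf_at conf b2 S i * (b ! i) - pay_at pay b2 S i
            - (\<Sum>j\<in>{length b..<length b2}. pay_at pay b2 S j)
          \<le> mu inc mrev b + xx inc conf b i * (b ! i) - pp inc pay b i))"

end

theory Submission
  imports Defs
begin

lemma sorted_nth_card:
  assumes "sorted (xs::nat list)" "distinct xs" "m < length xs"
  shows "card {j \<in> set xs. j < xs!m} = m"
proof -
  have ss: "sorted_wrt (<) xs" using assms strict_sorted_iff by blast
  have "{j \<in> set xs. j < xs!m} = (!) xs ` {..<m}"
  proof (rule set_eqI, rule iffI)
    fix j assume "j \<in> {j \<in> set xs. j < xs!m}"
    then obtain l where l: "l < length xs" "j = xs!l" "xs!l < xs!m" by (auto simp: in_set_conv_nth)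
    have "l < m"
    proof (rule ccontr)
      assume "\<not> l < m" then have "xs!m \<le> xs!l" using assms(1) l(1) by (simp add: sorted_nth_mono)
      then show False using l by simp
    qed
    then show "j \<in> (!) xs ` {..<m}" using l by auto
  next
    fix j assume "j \<in> (!) xs ` {..<m}"
    then obtain l where "l < m" "j = xs!l" by auto
    then show "j \<in> {j \<in> set xs. j < xs!m}" using ss assms(3) by (auto simp: sorted_wrt_nth_less)
  qed
  moreover have "inj_on ((!) xs) {..<m}" using assms(2,3) by (auto simp: inj_on_def nth_eq_iff_index_eq)
  ultimately show ?thesis by (simp add: card_image)
qed

lemma pos_nth: assumes "finite S" "k \<in> S" shows "sorted_list_of_set S ! pos S k = k"
proof -
  let ?xs = "sorted_list_of_set S"
  obtain m where m: "m < length ?xs" "?xs ! m = k" using assms by (metis in_set_conv_nth set_sorted_list_of_set)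
  have "pos S k = card {j \<in> set ?xs. j < ?xs!m}" unfolding pos_def using assms m by simp
  also have "\<dots> = m" by (rule sorted_nth_card) (use m in auto)
  finally show ?thesis using m by simp
qed

lemma incl_app: "incl (c @ d) {..<length c} = c"
  unfolding incl_def lessThan_atLeast0 by (rule nth_equalityI) (auto simp: nth_append)
lemma pos_lt_L: "k < L \<Longrightarrow> pos {..<L} k = k"
proof -
  assume "k < L"
  then have "{j \<in> {..<L}. j < k} = {..<k}" by auto
  then show ?thesis unfolding pos_def by simp
qed

locale tfm =
  fixes B :: nat
    and inc :: "real list \<Rightarrow> nat set pmf"
    and conf pay :: "real list \<Rightarrow> nat \<Rightarrow> real"
    and mrev :: "real list \<Rightarrow> real"
  assumes V: "valid_tfm B inc conf pay mrev"
begin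

lemmas V1 = V[unfolded valid_tfm_def, THEN conjunct1]
lemmas V2 = V[unfolded valid_tfm_def, THEN conjunct2, THEN conjunct1]
lemmas V3 = V[unfolded valid_tfm_def, THEN conjunct2, THEN conjunct2, THEN conjunct1]
lemmas V4 = V[unfolded valid_tfm_def, THEN conjunct2, THEN conjunct2, THEN conjunct2]

lemma Vc: "nonneg_bids c \<Longrightarrow> length c \<le> B \<Longrightarrow> k < length c \<Longrightarrow>
   0 \<le> conf c k \<and> conf c k \<le> 1 \<and> 0 \<le> pay c k \<and> pay c k \<le> c ! k * conf c k"
  using V2 by blast

lemma Vm: "nonneg_bids c \<Longrightarrow> length c \<le> B \<Longrightarrow> 0 \<le> mrev c \<and> mrev c \<le> (\<Sum>k<length c. pay c k)"
  using V2 by blast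

lemma Vx: "nonneg_bids b \<Longrightarrow> i < length b \<Longrightarrow> j < length b \<Longrightarrow> k < length b \<Longrightarrow>
   xx inc conf (swap_bids i j b) k = xx inc conf b (tr i j k)"
  using V4 by blast

lemma supp: "nonneg_bids b \<Longrightarrow> S \<in> set_pmf (inc b) \<Longrightarrow> S \<subseteq> {..<length b} \<and> card S \<le> B"
  using V1 by blast

lemma fin_supp: "nonneg_bids b \<Longrightarrow> finite (set_pmf (inc b))"
proof -
  assume "nonneg_bids b"
  then have "set_pmf (inc b) \<subseteq> Pow {..<length b}" using supp by blast
  then show ?thesis by (rule finite_subset) simp
qed

lemma integ: "nonneg_bids b \<Longrightarrow> integrable (measure_pmf (inc b)) (f :: nat set \<Rightarrow> real)"
  using fin_supp by (rule integrable_measure_pmf_finite)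

lemma E_le: "nonneg_bids b \<Longrightarrow> (\<And>S. S \<in> set_pmf (inc b) \<Longrightarrow> (f::nat set \<Rightarrow> real) S \<le> g S)
  \<Longrightarrow> measure_pmf.expectation (inc b) f \<le> measure_pmf.expectation (inc b) g"
  by (intro integral_mono_AE integrable_measure_pmf_finite fin_supp) (auto simp: AE_measure_pmf_iff)

lemma E_const: "measure_pmf.expectation (inc b) (\<lambda>_. c::real) = c"
  by simp

lemma incl_len: "length (incl b S) = card S"
  by (simp add: incl_def)

lemma incl_nth: "finite S \<Longrightarrow> k < card S \<Longrightarrow> incl b S ! k = b ! (sorted_list_of_set S ! k)"
  by (simp add: incl_def)

lemma incl_nonneg: "nonneg_bids b \<Longrightarrow> S \<subseteq> {..<length b} \<Longrightarrow> nonneg_bids (incl b S)"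
proof -
  assume a: "nonneg_bids b" "S \<subseteq> {..<length b}"
  have fin: "finite S" using a(2) finite_subset by blast
  show ?thesis unfolding nonneg_bids_def incl_def
  proof
    fix y assume "y \<in> set (map ((!) b) (sorted_list_of_set S))"
    then obtain k where "k \<in> S" "y = b ! k" using fin by auto
    then show "0 \<le> y" using a unfolding nonneg_bids_def by auto
  qed
qed

lemma pos_lt: "finite S \<Longrightarrow> k \<in> S \<Longrightarrow> pos S k < card S"
  unfolding pos_def by (intro psubset_card_mono) auto

lemma conf_bounds:
  assumes "nonneg_bids b" "S \<subseteq> {..<length b}" "card S \<le> B"
  shows "0 \<le> conf_at conf b S k" "conf_at conf b S k \<le> 1" "0 \<le> pay_at pay b S k"
    "pay_at pay b S k \<le> b ! k * conf_at conf b S k" "0 \<le> rev_at mrev b S"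
proof -
  have fin: "finite S" using assms(2) finite_subset by blast
  let ?c = "incl b S"
  have c1: "nonneg_bids ?c" using incl_nonneg assms by blast
  have c2: "length ?c \<le> B" using assms incl_len by simp
  have A: "\<forall>k<length ?c. 0 \<le> conf ?c k \<and> conf ?c k \<le> 1 \<and> 0 \<le> pay ?c k \<and> pay ?c k \<le> ?c ! k * conf ?c k"
    using Vc[OF c1 c2] by blast
  have R: "0 \<le> mrev ?c" using Vm[OF c1 c2] by blast
  show "0 \<le> rev_at mrev b S" using R by (simp add: rev_at_def)
  have X: "k \<in> S \<Longrightarrow> 0 \<le> conf ?c (pos S k) \<and> conf ?c (pos S k) \<le> 1 \<and> 0 \<le> pay ?c (pos S k) \<and>
      pay ?c (pos S k) \<le> b ! k * conf ?c (pos S k)"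
  proof -
    assume kS: "k \<in> S"
    have p: "pos S k < length ?c" using pos_lt[OF fin kS] incl_len by simp
    have "?c ! pos S k = b ! k"
      using incl_nth[OF fin] pos_lt[OF fin kS] pos_nth[OF fin kS] by simp
    then show ?thesis using A p by metis
  qed
  show "0 \<le> conf_at conf b S k" "conf_at conf b S k \<le> 1" "0 \<le> pay_at pay b S k"
    "pay_at pay b S k \<le> b ! k * conf_at conf b S k"
    using X by (auto simp: conf_at_def pay_at_def)
qed

lemma supp_bounds:
  assumes "nonneg_bids b" "S \<in> set_pmf (inc b)"
  shows "0 \<le> conf_at conf b S k" "conf_at conf b S k \<le> 1" "0 \<le> pay_at pay b S k"
    "pay_at pay b S k \<le> b ! k * conf_at conf b S k" "0 \<le> rev_at mrev b S"
  using supp[OF assms] assms(1) by (auto intro: conf_bounds)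

lemma xx_bounds: "nonneg_bids b \<Longrightarrow> 0 \<le> xx inc conf b k \<and> xx inc conf b k \<le> 1"
proof -
  assume a: "nonneg_bids b"
  have "measure_pmf.expectation (inc b) (\<lambda>_. 0::real) \<le> xx inc conf b k"
    unfolding xx_def by (rule E_le[OF a]) (use supp_bounds[OF a] in auto)
  moreover have "xx inc conf b k \<le> measure_pmf.expectation (inc b) (\<lambda>_. 1::real)"
    unfolding xx_def by (rule E_le[OF a]) (use supp_bounds[OF a] in auto)
  ultimately show ?thesis by simp
qed

lemma pp_nonneg: "nonneg_bids b \<Longrightarrow> 0 \<le> pp inc pay b k"
proof -
  assume a: "nonneg_bids b"
  have "measure_pmf.expectation (inc b) (\<lambda>_. 0::real) \<le> pp inc pay b k"
    unfolding pp_def by (rule E_le[OF a]) (use supp_bounds[OF a] in auto)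
  then show ?thesis by simp
qed

lemma sum_conf_at:
  assumes "nonneg_bids b" "S \<in> set_pmf (inc b)"
  shows "(\<Sum>j<length b. conf_at conf b S j) \<le> real B"
proof -
  have S: "S \<subseteq> {..<length b}" "card S \<le> B" using supp[OF assms] by auto
  have "(\<Sum>j<length b. conf_at conf b S j) \<le> (\<Sum>j<length b. if j \<in> S then 1 else 0)"
  proof (rule sum_mono)
    fix j show "conf_at conf b S j \<le> (if j \<in> S then 1 else 0)"
    proof (cases "j \<in> S")
      case True then show ?thesis using supp_bounds(2)[OF assms, of j] by simp
    next
      case False then show ?thesis by (simp add: conf_at_def)
    qed
  qed
  also have "\<dots> = real (card ({..<length b} \<inter> S))"
    by (simp add: sum.If_cases)
  also have "{..<length b} \<inter> S = S" using S by auto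
  finally show ?thesis using S by simp
qed

lemma xx_sum: "nonneg_bids b \<Longrightarrow> (\<Sum>j<length b. xx inc conf b j) \<le> real B"
proof -
  assume a: "nonneg_bids b"
  have "(\<Sum>j<length b. xx inc conf b j) = measure_pmf.expectation (inc b) (\<lambda>S. \<Sum>j<length b. conf_at conf b S j)"
    unfolding xx_def using integ[OF a] by simp
  also have "\<dots> \<le> measure_pmf.expectation (inc b) (\<lambda>_. real B)"
    by (rule E_le[OF a]) (rule sum_conf_at[OF a])
  finally show ?thesis by simp
qed

lemma xx_swap_eq: "nonneg_bids b \<Longrightarrow> i < length b \<Longrightarrow> j < length b \<Longrightarrow> b ! i = b ! j \<Longrightarrow>
  xx inc conf b i = xx inc conf b j"
proof -
  assume a: "nonneg_bids b" "i < length b" "j < length b" "b ! i = b ! j"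
  have "swap_bids i j b = b" unfolding swap_bids_def by (metis a(4) list_update_id)
  then show ?thesis using Vx[OF a(1,2,3,2)] by (simp add: tr_def)
qed

lemma mu_allzero:
  assumes a: "nonneg_bids b" and z: "\<forall>k<length b. b ! k = 0"
  shows "mu inc mrev b = 0"
proof -
  have r: "rev_at mrev b S = 0" if S: "S \<in> set_pmf (inc b)" for S
  proof -
    have S1: "S \<subseteq> {..<length b}" "card S \<le> B" using supp[OF a S] by auto
    have fin: "finite S" using S1 finite_subset by blast
    let ?c = "incl b S"
    have c1: "nonneg_bids ?c" using incl_nonneg a S1 by blast
    have c2: "length ?c \<le> B" using S1 incl_len by simp
    have cz: "?c ! k = 0" if "k < length ?c" for k
    proof -
      have "sorted_list_of_set S ! k \<in> S" using that fin incl_len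
        by (metis nth_mem set_sorted_list_of_set length_sorted_list_of_set)
      then show ?thesis using that fin incl_nth incl_len z S1 by auto
    qed
    have "mrev ?c \<le> (\<Sum>k<length ?c. pay ?c k)" using Vm[OF c1 c2] by blast
    also have "\<dots> \<le> (\<Sum>k<length ?c. 0)"
      by (rule sum_mono) (use Vc[OF c1 c2] cz in fastforce)
    finally have "mrev ?c \<le> 0" by simp
    then show ?thesis using Vm[OF c1 c2] by (simp add: rev_at_def)
  qed
  have "mu inc mrev b = measure_pmf.expectation (inc b) (\<lambda>_. 0::real)"
    unfolding mu_def by (intro antisym E_le[OF a]) (auto simp: r)
  then show ?thesis by simp
qed

end

locale tfm2 = tfm +
  assumes U: "UIC inc conf pay"
    and C: "SCP1 B inc conf pay mrev"
begin

lemma scp: "nonneg_bids b \<Longrightarrow> i < length b \<Longrightarrow> 0 \<le> b' \<Longrightarrow> nonneg_bids f \<Longrightarrow>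
   S \<subseteq> {..<length (b[i := b'] @ f)} \<Longrightarrow> card S \<le> B \<Longrightarrow>
   rev_at mrev (b[i := b'] @ f) S + conf_at conf (b[i := b'] @ f) S i * (b ! i) - pay_at pay (b[i := b'] @ f) S i
            - (\<Sum>j\<in>{length b..<length (b[i := b'] @ f)}. pay_at pay (b[i := b'] @ f) S j)
          \<le> mu inc mrev b + xx inc conf b i * (b ! i) - pp inc pay b i"
  using C unfolding SCP1_def Let_def by blast

lemma uic: "nonneg_bids b \<Longrightarrow> i < length b \<Longrightarrow> 0 \<le> b' \<Longrightarrow> nonneg_bids f \<Longrightarrow>
          xx inc conf (b[i := b'] @ f) i * (b ! i) - pp inc pay (b[i := b'] @ f) i
            - (\<Sum>j\<in>{length b..<length (b[i := b'] @ f)}. pp inc pay (b[i := b'] @ f) j)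
          \<le> xx inc conf b i * (b ! i) - pp inc pay b i"
  using U unfolding UIC_def Let_def by blast

lemma nonneg_upd: "nonneg_bids b \<Longrightarrow> 0 \<le> t \<Longrightarrow> nonneg_bids (b[i := t])"
  unfolding nonneg_bids_def using set_update_subset_insert by fastforce

lemma key:
  assumes a: "nonneg_bids b" "i < length b" "0 \<le> y" "0 \<le> z"
  shows "mu inc mrev (b[i:=z]) - mu inc mrev (b[i:=y])
     \<le> (xx inc conf (b[i:=y]) i - xx inc conf (b[i:=z]) i) * (y - z)"
proof -
  let ?by = "b[i:=y]"
  let ?bz = "b[i:=z]"
  have ny: "nonneg_bids ?by" and nz: "nonneg_bids ?bz" using nonneg_upd a by auto
  have s: "rev_at mrev ?bz S + conf_at conf ?bz S i * y - pay_at pay ?bz S i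
      \<le> mu inc mrev ?by + xx inc conf ?by i * y - pp inc pay ?by i" if S: "S \<in> set_pmf (inc ?bz)" for S
  proof -
    have S1: "S \<subseteq> {..<length ?bz}" "card S \<le> B" using supp[OF nz S] by auto
    have "nonneg_bids []" by (simp add: nonneg_bids_def)
    from scp[OF ny _ a(4) this, of i S] S1 a(2) show ?thesis by simp
  qed
  have E: "measure_pmf.expectation (inc ?bz) (\<lambda>S. rev_at mrev ?bz S + conf_at conf ?bz S i * y - pay_at pay ?bz S i)
     = mu inc mrev ?bz + xx inc conf ?bz i * y - pp inc pay ?bz i"
    unfolding mu_def xx_def pp_def using integ[OF nz] by (simp add: integral_diff integral_add)
  have "measure_pmf.expectation (inc ?bz) (\<lambda>S. rev_at mrev ?bz S + conf_at conf ?bz S i * y - pay_at pay ?bz S i)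
     \<le> measure_pmf.expectation (inc ?bz) (\<lambda>S. mu inc mrev ?by + xx inc conf ?by i * y - pp inc pay ?by i)"
    by (rule E_le[OF nz]) (rule s)
  then have 1: "mu inc mrev ?bz + xx inc conf ?bz i * y - pp inc pay ?bz i
      \<le> mu inc mrev ?by + xx inc conf ?by i * y - pp inc pay ?by i" using E by simp
  have "nonneg_bids []" by (simp add: nonneg_bids_def)
  from uic[OF nz _ a(3) this, of i] a(2)
  have 2: "xx inc conf ?by i * z - pp inc pay ?by i \<le> xx inc conf ?bz i * z - pp inc pay ?bz i" by simp
  have 3: "(xx inc conf ?by i - xx inc conf ?bz i) * (y - z)
     = xx inc conf ?by i * y - xx inc conf ?bz i * y + xx inc conf ?bz i * z - xx inc conf ?by i * z"
    by (simp add: algebra_simps)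
  show ?thesis using 1 2 3 by linarith
qed

lemma abs_key:
  assumes a: "nonneg_bids b" "i < length b" "0 \<le> t" "0 \<le> s"
  shows "\<bar>mu inc mrev (b[i:=t]) - mu inc mrev (b[i:=s])\<bar>
     \<le> (xx inc conf (b[i:=t]) i - xx inc conf (b[i:=s]) i) * (t - s)"
proof -
  have 1: "mu inc mrev (b[i:=t]) - mu inc mrev (b[i:=s])
     \<le> (xx inc conf (b[i:=s]) i - xx inc conf (b[i:=t]) i) * (s - t)"
    using key[OF a(1,2,4,3)] .
  have 2: "mu inc mrev (b[i:=s]) - mu inc mrev (b[i:=t])
     \<le> (xx inc conf (b[i:=t]) i - xx inc conf (b[i:=s]) i) * (t - s)"
    using key[OF a(1,2,3,4)] .
  have 3: "(xx inc conf (b[i:=s]) i - xx inc conf (b[i:=t]) i) * (s - t)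
      = (xx inc conf (b[i:=t]) i - xx inc conf (b[i:=s]) i) * (t - s)" by (simp add: algebra_simps)
  show ?thesis using 1 2 3 by linarith
qed

lemma mu_upd0:
  assumes a: "nonneg_bids b" "i < length b"
  shows "mu inc mrev b = mu inc mrev (b[i:=0])"
proof -
  define Y where "Y = b ! i"
  have Y0: "0 \<le> Y" using a unfolding Y_def nonneg_bids_def by auto
  define m where "m t = mu inc mrev (b[i:=t])" for t
  define X where "X t = xx inc conf (b[i:=t]) i" for t
  have X01: "0 \<le> X t \<and> X t \<le> 1" if "0 \<le> t" for t
    unfolding X_def using xx_bounds nonneg_upd a that by blast
  have bnd: "\<bar>m Y - m 0\<bar> \<le> Y / real n" if n: "n > 0" for n :: nat
  proof -
    define h where "h = Y / real n"
    define g where "g k = real k * h" for k :: nat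
    have h0: "0 \<le> h" unfolding h_def using Y0 by simp
    have g0: "0 \<le> g k" for k unfolding g_def using h0 by simp
    have gn: "g n = Y" unfolding g_def h_def using n by simp
    have gs: "g (Suc k) - g k = h" for k unfolding g_def by (simp add: algebra_simps)
    have "\<bar>m (g n) - m (g 0)\<bar> = \<bar>\<Sum>k<n. m (g (Suc k)) - m (g k)\<bar>"
      using sum_lessThan_telescope[of "\<lambda>k. m (g k)" n] by simp
    also have "\<dots> \<le> (\<Sum>k<n. \<bar>m (g (Suc k)) - m (g k)\<bar>)" by (rule sum_abs)
    also have "\<dots> \<le> (\<Sum>k<n. (X (g (Suc k)) - X (g k)) * h)"
    proof (rule sum_mono)
      fix k
      show "\<bar>m (g (Suc k)) - m (g k)\<bar> \<le> (X (g (Suc k)) - X (g k)) * h"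
        using abs_key[OF a g0 g0, of "Suc k" k] gs[of k] unfolding m_def X_def by simp
    qed
    also have "\<dots> = (\<Sum>k<n. X (g (Suc k)) - X (g k)) * h" by (simp add: sum_distrib_right)
    also have "\<dots> = (X (g n) - X (g 0)) * h" using sum_lessThan_telescope[of "\<lambda>k. X (g k)" n] by simp
    also have "\<dots> \<le> 1 * h" using X01[OF g0, of n] X01[OF g0, of 0] h0
      by (intro mult_right_mono) auto
    finally show ?thesis using gn g0 unfolding g_def h_def by simp
  qed
  have "m Y = m 0"
  proof (rule ccontr)
    assume ne: "m Y \<noteq> m 0"
    define d where "d = \<bar>m Y - m 0\<bar>"
    have d0: "d > 0" using ne unfolding d_def by simp
    obtain n :: nat where n: "Y / d < real n" using reals_Archimedean2 by blast
    have npos: "n > 0" using n d0 Y0 by (metis divide_nonneg_pos not_gr0 not_less of_nat_0)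
    have "Y < d * real n" using n d0 by (simp add: field_simps)
    then have "Y / real n < d" using npos by (simp add: field_simps)
    then show False using bnd[OF npos] unfolding d_def by linarith
  qed
  moreover have "m Y = mu inc mrev b" unfolding m_def Y_def by simp
  ultimately show ?thesis unfolding m_def by simp
qed

lemma mu_zero: "nonneg_bids b \<Longrightarrow> mu inc mrev b = 0"
proof (induction "card {k. k < length b \<and> b ! k \<noteq> 0}" arbitrary: b rule: less_induct)
  case (less b)
  show ?case
  proof (cases "\<forall>k<length b. b ! k = 0")
    case True then show ?thesis using mu_allzero less.prems by blast
  next
    case False
    then obtain i where i: "i < length b" "b ! i \<noteq> 0" by blast
    let ?b0 = "b[i := 0]"
    have n0: "nonneg_bids ?b0" using nonneg_upd less.prems by auto
    have eq: "{k. k < length ?b0 \<and> ?b0 ! k \<noteq> 0} = {k. k < length b \<and> b ! k \<noteq> 0} - {i}"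
      using i by (auto simp: nth_list_update)
    have fin: "finite {k. k < length b \<and> b ! k \<noteq> 0}" by simp
    have "card {k. k < length ?b0 \<and> ?b0 ! k \<noteq> 0} < card {k. k < length b \<and> b ! k \<noteq> 0}"
      unfolding eq by (rule card_Diff1_less[OF fin]) (use i in simp)
    then have "mu inc mrev ?b0 = 0" using less.hyps n0 by blast
    then show ?thesis using mu_upd0[OF less.prems i(1)] by simp
  qed
qed

lemma conf_zero:
  assumes c: "nonneg_bids c" "length c \<le> B" "k < length c"
  shows "conf c k = 0"
proof -
  let ?L = "length c"
  define V where "V = sum_list c + 1"
  have ck0: "0 \<le> c ! k" using c unfolding nonneg_bids_def by auto
  have cV: "c ! k + 1 \<le> V" unfolding V_def using c member_le_sum_list[of "c!k" c]
    unfolding nonneg_bids_def by auto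
  have V0: "0 \<le> V" using cV ck0 by linarith
  have C0: "0 \<le> conf c k \<and> conf c k \<le> 1 \<and> 0 \<le> pay c k \<and> pay c k \<le> c ! k * conf c k"
    using Vc[OF c] .
  have cb: "conf c k \<le> real B * V / (real M + 1)" for M :: nat
  proof -
    define b where "b = c[k:=V] @ replicate M V"
    have nb: "nonneg_bids b" unfolding b_def using nonneg_upd[OF c(1) V0] V0
      unfolding nonneg_bids_def by auto
    have lb: "length b = ?L + M" unfolding b_def by simp
    have kb: "k < length b" using lb c(3) by simp
    have bk: "b ! k = V" unfolding b_def using c(3) by (simp add: nth_append)
    define J where "J = insert k {?L..<?L+M}"
    have xJ: "xx inc conf b j = xx inc conf b k" if "j \<in> J" for j
    proof -
      have "j < length b" "b ! j = V" using that c(3) lb unfolding J_def b_def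
        by (auto simp: nth_append)
      then show ?thesis using xx_swap_eq[OF nb kb, of j] bk by simp
    qed
    have cardJ: "card J = M + 1" unfolding J_def using c(3) by simp
    have "(real M + 1) * xx inc conf b k = (\<Sum>j\<in>J. xx inc conf b j)"
      using xJ cardJ by simp
    also have "\<dots> \<le> (\<Sum>j<length b. xx inc conf b j)"
      by (rule sum_mono2) (use lb c(3) xx_bounds[OF nb] in \<open>auto simp: J_def\<close>)
    also have "\<dots> \<le> real B" by (rule xx_sum[OF nb])
    finally have xb: "(real M + 1) * xx inc conf b k \<le> real B" .
    have nil: "nonneg_bids []" by (simp add: nonneg_bids_def)
    have b2: "b[k := c ! k] @ [] = c @ replicate M V" unfolding b_def using c(3)
      by (simp add: list_update_append1)
    have S1: "{..<?L} \<subseteq> {..<length (b[k := c ! k] @ [])}" using lb by auto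
    have S2: "card {..<?L} \<le> B" using c(2) by simp
    have "rev_at mrev (c @ replicate M V) {..<?L} + conf_at conf (c @ replicate M V) {..<?L} k * V
       - pay_at pay (c @ replicate M V) {..<?L} k - 0
       \<le> mu inc mrev b + xx inc conf b k * V - pp inc pay b k"
      using scp[OF nb kb ck0 nil S1 S2] b2 bk lb by simp
    moreover have "rev_at mrev (c @ replicate M V) {..<?L} = mrev c"
      by (simp add: rev_at_def incl_app)
    moreover have "conf_at conf (c @ replicate M V) {..<?L} k = conf c k"
      using c(3) by (simp add: conf_at_def incl_app pos_lt_L)
    moreover have "pay_at pay (c @ replicate M V) {..<?L} k = pay c k"
      using c(3) by (simp add: pay_at_def incl_app pos_lt_L)
    moreover have "mu inc mrev b = 0" by (rule mu_zero[OF nb])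
    moreover have "0 \<le> pp inc pay b k" by (rule pp_nonneg[OF nb])
    moreover have "0 \<le> mrev c" using Vm[OF c(1,2)] by simp
    ultimately have "conf c k * V - pay c k \<le> xx inc conf b k * V" by (smt (verit))
    moreover have "conf c k \<le> conf c k * V - pay c k"
    proof -
      have "conf c k * (c ! k + 1) \<le> conf c k * V" using C0 cV by (intro mult_left_mono) auto
      then show ?thesis using C0 by (simp add: algebra_simps)
    qed
    ultimately have "conf c k \<le> xx inc conf b k * V" by linarith
    moreover have "xx inc conf b k * V \<le> real B * V / (real M + 1)"
    proof -
      have "xx inc conf b k \<le> real B / (real M + 1)" using xb by (simp add: field_simps)
      then show ?thesis using V0 by (metis mult_right_mono times_divide_eq_left)
    qed
    ultimately show ?thesis by linarith
  qed
  show ?thesis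
  proof (rule ccontr)
    assume ne: "conf c k \<noteq> 0"
    then have e: "conf c k > 0" using C0 by simp
    obtain M :: nat where M: "real B * V / conf c k < real M" using reals_Archimedean2 by blast
    have "real B * V < conf c k * real M" using M e by (simp add: field_simps)
    also have "\<dots> \<le> conf c k * (real M + 1)" using e by simp
    finally have "real B * V / (real M + 1) < conf c k" by (simp add: field_simps)
    then show False using cb[of M] by linarith
  qed
qed

lemma xx_zero: assumes nb: "nonneg_bids b" shows "xx inc conf b i = 0"
proof -
  have z: "conf_at conf b S i = 0" if S: "S \<in> set_pmf (inc b)" for S
  proof (cases "i \<in> S")
    case True
    have S1: "S \<subseteq> {..<length b}" "card S \<le> B" using supp[OF nb S] by auto
    have fin: "finite S" using S1 finite_subset by blast
    have "conf (incl b S) (pos S i) = 0"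
      by (rule conf_zero) (use incl_nonneg[OF nb S1(1)] incl_len S1 pos_lt[OF fin True] in auto)
    then show ?thesis by (simp add: conf_at_def)
  next
    case False then show ?thesis by (simp add: conf_at_def)
  qed
  have "xx inc conf b i = measure_pmf.expectation (inc b) (\<lambda>_. 0::real)"
    unfolding xx_def by (intro antisym E_le[OF nb]) (auto simp: z)
  then show ?thesis by simp
qed

end

theorem mainTheorem2:
  fixes B :: nat
    and inc :: "real list \<Rightarrow> nat set pmf"
    and conf pay :: "real list \<Rightarrow> nat \<Rightarrow> real"
    and mrev :: "real list \<Rightarrow> real"
  assumes "valid_tfm B inc conf pay mrev"
    and "UIC inc conf pay"
    and "SCP1 B inc conf pay mrev"
  shows "\<forall>b. nonneg_bids b \<longrightarrow> (\<forall>i<length b. xx inc conf b i = 0) \<and> mu inc mrev b = 0"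
proof -
  interpret tfm2 B inc conf pay mrev
    using assms by (simp add: tfm2_def tfm_def tfm2_axioms_def)
  show ?thesis using xx_zero mu_zero by blast
qed

end
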